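(* Let $X$ be a real vector space, let $D \subseteq X$ be a convex set, and let $f: D \to \mathbf{R}\cup\{+\infty\}$ be radially lower semicontinuous. Then $f$ is convex, i.e. $f(\lambda x+(1-\lambda)y) \le \lambda f(x)+(1-\lambda)f(y)$ for all $x,y \in D$ and all $\lambda \in [0,1]$, if and only if for all $x,y \in D$ there exists $\lambda=\lambda(x,y) \in (0,1)$ such that $f(\lambda x+(1-\lambda)y) \le \lambda f(x)+(1-\lambda)f(y)$.
   Context: A function $f: D \to \mathbf{R}\cup\{+\infty\}$ on a convex subset $D$ of a real vector space is called radially lower semicontinuous if $f(x) \le \liminf_{t \downarrow 0} f(x+t(y-x))$ for all $x,y \in D$. Arithmetic in $\mathbf{R}\cup\{+\infty\}$ follows the usual conventions ($a+(+\infty)=+\infty$ for $a\in\mathbf{R}\cup\{+\infty\}$, $c\cdot(+\infty)=+\infty$ for $c>0$, and $0\cdot(+\infty)=0$). *)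

theory Defs
  imports "HOL-Analysis.Analysis"
begin

text \<open>Functions D -> R \<union> {+\<infinity>} are modelled as f :: 'a => ereal with f x \<noteq> -\<infinity> on D.\<close>

definition radially_lsc :: "'a::real_vector set \<Rightarrow> ('a \<Rightarrow> ereal) \<Rightarrow> bool" where
  "radially_lsc D f \<longleftrightarrow>
     (\<forall>x\<in>D. \<forall>y\<in>D. f x \<le> Liminf (at_right (0::real)) (\<lambda>t. f (x + t *\<^sub>R (y - x))))"

end

theory Submission
  imports Defs
begin

lemma seg_in:
  fixes D :: "'a::real_vector set"
  assumes "convex D" "x \<in> D" "y \<in> D" "t \<in> {0..1}"
  shows "x + t *\<^sub>R (y - x) \<in> D"
proof -
  have "(1 - t) *\<^sub>R x + t *\<^sub>R y \<in> D"
    using assms by (intro convexD) auto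
  moreover have "(1 - t) *\<^sub>R x + t *\<^sub>R y = x + t *\<^sub>R (y - x)"
    by (simp add: algebra_simps)
  ultimately show ?thesis by simp
qed

lemma seg_lsc:
  fixes D :: "'a::real_vector set" and f :: "'a \<Rightarrow> ereal"
  assumes lsc: "radially_lsc D f" and cvx: "convex D" and xD: "x \<in> D" and yD: "y \<in> D"
    and t: "t \<in> {0..1}" and u: "u \<in> {0..1}"
    and gt: "ereal (a + t*d) < f (x + t *\<^sub>R (y - x))"
  shows "\<exists>b>0. \<forall>r. 0 < r \<and> r < b \<longrightarrow>
     ereal (a + (t + r*(u-t))*d) < f (x + (t + r*(u-t)) *\<^sub>R (y - x))"
proof -
  define p where "p = x + t *\<^sub>R (y - x)"
  define q where "q = x + u *\<^sub>R (y - x)"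
  have pD: "p \<in> D" unfolding p_def using seg_in[OF cvx xD yD t] .
  have qD: "q \<in> D" unfolding q_def using seg_in[OF cvx xD yD u] .
  have eq: "\<And>r. p + r *\<^sub>R (q - p) = x + (t + r*(u-t)) *\<^sub>R (y - x)"
    unfolding p_def q_def by (simp add: algebra_simps)
  have L: "f p \<le> Liminf (at_right (0::real)) (\<lambda>r. f (p + r *\<^sub>R (q - p)))"
    using lsc pD qD unfolding radially_lsc_def by blast
  have gt': "ereal (a + t*d) < f p" using gt unfolding p_def .
  from ereal_dense2[OF gt'] obtain c where c1: "ereal (a + t*d) < ereal c" and c2: "ereal c < f p"
    by blast
  have "\<forall>z<f p. \<forall>\<^sub>F r in at_right (0::real). z < f (p + r *\<^sub>R (q - p))"
    using L by (simp only: le_Liminf_iff)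
  hence ev: "\<forall>\<^sub>F r in at_right (0::real). ereal c < f (p + r *\<^sub>R (q - p))"
    using c2 by blast
  have "\<exists>b>0. \<forall>r>0. r < b \<longrightarrow> ereal c < f (p + r *\<^sub>R (q - p))"
    using ev eventually_at_right[of "0::real" 1] by simp
  then obtain b1 where b1: "b1 > 0" and hb1: "\<And>r. r > 0 \<Longrightarrow> r < b1 \<Longrightarrow> ereal c < f (p + r *\<^sub>R (q - p))"
    by blast
  define m where "m = c - (a + t*d)"
  have m: "m > 0" using c1 unfolding m_def by simp
  define b2 where "b2 = m / (\<bar>(u-t)*d\<bar> + 1)"
  have b2: "b2 > 0" unfolding b2_def using m by (simp add: add_pos_nonneg)
  show ?thesis
  proof (intro exI[of _ "min b1 b2"] conjI allI impI)
    show "min b1 b2 > 0" using b1 b2 by simp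
    fix r assume r: "0 < r \<and> r < min b1 b2"
    have "r * \<bar>(u-t)*d\<bar> \<le> b2 * \<bar>(u-t)*d\<bar>"
      using r by (intro mult_right_mono) auto
    also have "b2 * \<bar>(u-t)*d\<bar> < m"
    proof -
      have "b2 * (\<bar>(u-t)*d\<bar> + 1) = m" unfolding b2_def by simp
      thus ?thesis using b2 by (simp add: algebra_simps)
    qed
    finally have "r * \<bar>(u-t)*d\<bar> < m" .
    moreover have "r*((u-t)*d) \<le> r * \<bar>(u-t)*d\<bar>"
      using r by (intro mult_left_mono) auto
    ultimately have "a + (t + r*(u-t))*d < c" unfolding m_def by (simp add: algebra_simps)
    hence "ereal (a + (t + r*(u-t))*d) < ereal c" by simp
    also have "ereal c < f (p + r *\<^sub>R (q - p))" using hb1 r by simp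
    finally show "ereal (a + (t + r*(u-t))*d) < f (x + (t + r*(u-t)) *\<^sub>R (y - x))"
      using eq by simp
  qed
qed

lemma seg_main:
  fixes D :: "'a::real_vector set" and f :: "'a \<Rightarrow> ereal"
  assumes cvx: "convex D" and lsc: "radially_lsc D f" and xD: "x \<in> D" and yD: "y \<in> D"
    and fx: "f x = ereal fx" and fy: "f y = ereal fy"
    and H: "\<forall>x\<in>D. \<forall>y\<in>D. \<exists>l\<in>{0<..<1::real}.
            f (l *\<^sub>R x + (1 - l) *\<^sub>R y) \<le> ereal l * f x + ereal (1 - l) * f y"
    and t0: "t0 \<in> {0..1}"
  shows "f (x + t0 *\<^sub>R (y - x)) \<le> ereal (fx + t0 * (fy - fx))"
proof -
  define d where "d = fy - fx"
  define z where "z = (\<lambda>t::real. x + t *\<^sub>R (y - x))"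
  define S where "S = {t\<in>{0..1}. f (z t) \<le> ereal (fx + t*d)}"
  have zD: "\<And>t. t \<in> {0..1} \<Longrightarrow> z t \<in> D" unfolding z_def using seg_in[OF cvx xD yD] by blast
  have S0: "0 \<in> S" unfolding S_def z_def using fx by simp
  have S1: "1 \<in> S" unfolding S_def z_def d_def using fy by simp
  have comb: "\<exists>c\<in>S. a0 < c \<and> c < b0" if a0S: "a0 \<in> S" and b0S: "b0 \<in> S" and ab: "a0 < b0" for a0 b0
  proof -
    have a01: "a0 \<in> {0..1}" and b01: "b0 \<in> {0..1}" using a0S b0S unfolding S_def by auto
    obtain l where l: "l \<in> {0<..<1::real}"
      and hl: "f (l *\<^sub>R z a0 + (1 - l) *\<^sub>R z b0) \<le> ereal l * f (z a0) + ereal (1 - l) * f (z b0)"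
      using H zD[OF a01] zD[OF b01] by blast
    define c where "c = l*a0 + (1-l)*b0"
    have zc: "l *\<^sub>R z a0 + (1 - l) *\<^sub>R z b0 = z c" unfolding z_def c_def by (simp add: algebra_simps)
    have p1: "(1-l)*(b0-a0) > 0" using l ab by (intro mult_pos_pos) auto
    have p2: "l*(b0-a0) > 0" using l ab by (intro mult_pos_pos) auto
    have ac: "a0 < c" using p1 unfolding c_def by (simp add: algebra_simps)
    have cb: "c < b0" using p2 unfolding c_def by (simp add: algebra_simps)
    have "ereal l * f (z a0) \<le> ereal l * ereal (fx + a0*d)"
      using a0S l unfolding S_def by (intro ereal_mult_left_mono) auto
    moreover have "ereal (1-l) * f (z b0) \<le> ereal (1-l) * ereal (fx + b0*d)"
      using b0S l unfolding S_def by (intro ereal_mult_left_mono) auto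
    ultimately have "ereal l * f (z a0) + ereal (1 - l) * f (z b0)
        \<le> ereal l * ereal (fx + a0*d) + ereal (1-l) * ereal (fx + b0*d)"
      by (rule add_mono)
    also have "\<dots> = ereal (fx + c*d)" unfolding c_def by (simp add: algebra_simps)
    finally have "f (z c) \<le> ereal (fx + c*d)" using hl zc by simp
    moreover have "c \<in> {0..1}" using ac cb a01 b01 by auto
    ultimately have "c \<in> S" unfolding S_def by simp
    thus ?thesis using ac cb by blast
  qed
  show ?thesis
  proof (rule ccontr)
    assume nt: "\<not> ?thesis"
    hence t0S: "t0 \<notin> S" unfolding S_def z_def d_def by simp
    define A where "A = {s\<in>S. s \<le> t0}"
    define a0 where "a0 = Sup A"
    have Ane: "A \<noteq> {}" using S0 t0 unfolding A_def by auto
    have Abd: "bdd_above A" unfolding A_def by (rule bdd_aboveI[of _ t0]) auto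
    have a0le: "a0 \<le> t0" unfolding a0_def using Ane by (intro cSup_least) (auto simp: A_def)
    have a0ge: "0 \<le> a0" unfolding a0_def using Abd S0 t0 by (intro cSup_upper2[of 0]) (auto simp: A_def)
    have upA: "\<And>s. s \<in> A \<Longrightarrow> s \<le> a0" unfolding a0_def using Abd by (intro cSup_upper)
    have a0S: "a0 \<in> S"
    proof (rule ccontr)
      assume na: "a0 \<notin> S"
      have a01: "a0 \<in> {0..1}" using a0le a0ge t0 by auto
      have gt: "ereal (fx + a0*d) < f (x + a0 *\<^sub>R (y - x))" using na a01 unfolding S_def z_def by auto
      obtain b where b: "b > 0" and hb: "\<And>r. 0 < r \<and> r < b \<Longrightarrow>
          ereal (fx + (a0 + r*(0-a0))*d) < f (x + (a0 + r*(0-a0)) *\<^sub>R (y - x))"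
        using seg_lsc[OF lsc cvx xD yD a01, of 0 fx d] gt by auto
      have a0pos: "a0 > 0" using a0ge na S0 by (cases "a0 = 0") auto
      have "a0 - b*a0 < a0" using b a0pos by simp
      then obtain s where sA: "s \<in> A" and s: "a0 - b*a0 < s"
        using less_cSup_iff[OF Ane Abd] unfolding a0_def by blast
      have "s \<le> a0" using upA sA .
      moreover have "s \<noteq> a0" using sA na unfolding A_def by auto
      ultimately have sa: "s < a0" by simp
      define r where "r = (a0 - s)/a0"
      have r0: "0 < r" unfolding r_def using sa a0pos by simp
      have rb: "r < b" unfolding r_def using s a0pos by (simp add: field_simps)
      have rs: "a0 + r*(0-a0) = s" unfolding r_def using a0pos by (simp add: field_simps)
      have "ereal (fx + s*d) < f (z s)" using hb[of r] r0 rb rs unfolding z_def by simp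
      moreover have "f (z s) \<le> ereal (fx + s*d)" using sA unfolding A_def S_def by auto
      ultimately show False by simp
    qed
    have a0t: "a0 < t0" using a0le a0S t0S by (cases "a0 = t0") auto
    have noA: "\<And>s. a0 < s \<Longrightarrow> s \<le> t0 \<Longrightarrow> s \<notin> S"
      using upA unfolding A_def by force
    define B where "B = {s\<in>S. t0 \<le> s}"
    define b0 where "b0 = Inf B"
    have Bne: "B \<noteq> {}" using S1 t0 unfolding B_def by auto
    have Bbd: "bdd_below B" unfolding B_def by (rule bdd_belowI[of _ t0]) auto
    have b0ge: "t0 \<le> b0" unfolding b0_def using Bne by (intro cInf_greatest) (auto simp: B_def)
    have b0le: "b0 \<le> 1" unfolding b0_def using Bbd S1 t0 by (intro cInf_lower2[of 1]) (auto simp: B_def)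
    have loB: "\<And>s. s \<in> B \<Longrightarrow> b0 \<le> s" unfolding b0_def using Bbd by (intro cInf_lower)
    have b0S: "b0 \<in> S"
    proof (rule ccontr)
      assume na: "b0 \<notin> S"
      have b01: "b0 \<in> {0..1}" using b0le b0ge t0 by auto
      have gt: "ereal (fx + b0*d) < f (x + b0 *\<^sub>R (y - x))" using na b01 unfolding S_def z_def by auto
      obtain b where b: "b > 0" and hb: "\<And>r. 0 < r \<and> r < b \<Longrightarrow>
          ereal (fx + (b0 + r*(1-b0))*d) < f (x + (b0 + r*(1-b0)) *\<^sub>R (y - x))"
        using seg_lsc[OF lsc cvx xD yD b01, of 1 fx d] gt by auto
      have b0lt: "b0 < 1" using b0le na S1 by (cases "b0 = 1") auto
      have "b0 < b0 + b*(1-b0)" using b b0lt by simp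
      then obtain s where sB: "s \<in> B" and s: "s < b0 + b*(1-b0)"
        using cInf_less_iff[OF Bne Bbd] unfolding b0_def by blast
      have "b0 \<le> s" using loB sB .
      moreover have "s \<noteq> b0" using sB na unfolding B_def by auto
      ultimately have sa: "b0 < s" by simp
      define r where "r = (s - b0)/(1-b0)"
      have r0: "0 < r" unfolding r_def using sa b0lt by simp
      have rb: "r < b" unfolding r_def using s b0lt by (simp add: field_simps)
      have rs: "b0 + r*(1-b0) = s" unfolding r_def using b0lt by (simp add: field_simps)
      have "ereal (fx + s*d) < f (z s)" using hb[of r] r0 rb rs unfolding z_def by simp
      moreover have "f (z s) \<le> ereal (fx + s*d)" using sB unfolding B_def S_def by auto
      ultimately show False by simp
    qed
    have b0t: "t0 < b0" using b0ge b0S t0S by (cases "b0 = t0") auto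
    have noB: "\<And>s. t0 \<le> s \<Longrightarrow> s < b0 \<Longrightarrow> s \<notin> S"
      using loB unfolding B_def by force
    obtain c where cS: "c \<in> S" and c: "a0 < c" "c < b0" using comb[OF a0S b0S] a0t b0t by auto
    show False
    proof (cases "c \<le> t0")
      case True thus False using noA[of c] c cS by auto
    next
      case False thus False using noB[of c] c cS by auto
    qed
  qed
qed

theorem theorem1:
  fixes D :: "'a::real_vector set" and f :: "'a \<Rightarrow> ereal"
  assumes "convex D"
    and "\<forall>x\<in>D. f x \<noteq> -\<infinity>"
    and "radially_lsc D f"
  shows "(\<forall>x\<in>D. \<forall>y\<in>D. \<forall>l\<in>{0..1::real}.
            f (l *\<^sub>R x + (1 - l) *\<^sub>R y) \<le> ereal l * f x + ereal (1 - l) * f y)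
     \<longleftrightarrow> (\<forall>x\<in>D. \<forall>y\<in>D. \<exists>l\<in>{0<..<1::real}.
            f (l *\<^sub>R x + (1 - l) *\<^sub>R y) \<le> ereal l * f x + ereal (1 - l) * f y)"
proof
  assume A: "\<forall>x\<in>D. \<forall>y\<in>D. \<forall>l\<in>{0..1::real}.
            f (l *\<^sub>R x + (1 - l) *\<^sub>R y) \<le> ereal l * f x + ereal (1 - l) * f y"
  show "\<forall>x\<in>D. \<forall>y\<in>D. \<exists>l\<in>{0<..<1::real}.
            f (l *\<^sub>R x + (1 - l) *\<^sub>R y) \<le> ereal l * f x + ereal (1 - l) * f y"
  proof (intro ballI)
    fix x y assume "x \<in> D" "y \<in> D"
    show "\<exists>l\<in>{0<..<1::real}.
            f (l *\<^sub>R x + (1 - l) *\<^sub>R y) \<le> ereal l * f x + ereal (1 - l) * f y"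
    proof (rule bexI[of _ "1/2"])
      have "(1/2::real) \<in> {0..1}" by simp
      thus "f ((1/2) *\<^sub>R x + (1 - 1/2) *\<^sub>R y) \<le> ereal (1/2) * f x + ereal (1 - 1/2) * f y"
        using A \<open>x \<in> D\<close> \<open>y \<in> D\<close> by blast
    qed simp
  qed
next
  assume H: "\<forall>x\<in>D. \<forall>y\<in>D. \<exists>l\<in>{0<..<1::real}.
            f (l *\<^sub>R x + (1 - l) *\<^sub>R y) \<le> ereal l * f x + ereal (1 - l) * f y"
  show "\<forall>x\<in>D. \<forall>y\<in>D. \<forall>l\<in>{0..1::real}.
            f (l *\<^sub>R x + (1 - l) *\<^sub>R y) \<le> ereal l * f x + ereal (1 - l) * f y"
  proof (intro ballI)
    fix x y l assume xD: "x \<in> D" and yD: "y \<in> D" and l: "l \<in> {0..1::real}"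
    show "f (l *\<^sub>R x + (1 - l) *\<^sub>R y) \<le> ereal l * f x + ereal (1 - l) * f y"
    proof (cases "l = 0 \<or> l = 1")
      case True thus ?thesis by (auto simp flip: zero_ereal_def)
    next
      case False
      hence l0: "0 < l" and l1: "l < 1" using l by auto
      show ?thesis
      proof (cases "f x = \<infinity> \<or> f y = \<infinity>")
        case True
        have eqi: "ereal l * f x + ereal (1 - l) * f y = \<infinity>"
          using True l0 l1 assms(2) xD yD by auto
        show ?thesis unfolding eqi by simp
      next
        case False
        then obtain fx fy where fx: "f x = ereal fx" and fy: "f y = ereal fy"
          using assms(2) xD yD by (metis ereal_cases)
        have "f (x + (1-l) *\<^sub>R (y - x)) \<le> ereal (fx + (1-l) * (fy - fx))"
          using seg_main[OF assms(1) assms(3) xD yD fx fy H] l by auto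
        moreover have "x + (1-l) *\<^sub>R (y - x) = l *\<^sub>R x + (1 - l) *\<^sub>R y"
          by (simp add: algebra_simps)
        moreover have "ereal l * f x + ereal (1 - l) * f y = ereal (fx + (1-l) * (fy - fx))"
          using fx fy by (simp add: algebra_simps)
        ultimately show ?thesis by simp
      qed
    qed
  qed
qed

end
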